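(* Let $A$ be a real nonsingular tridiagonal $n\times n$ matrix with diagonal entries $A_{i,i}=b_i$ ($i=1,\dots,n$), subdiagonal entries $A_{i+1,i}=a_i$ and superdiagonal entries $A_{i,i+1}=c_i$ ($i=1,\dots,n-1$), let $\mathbf F\in\mathbb R^n$ and let $\mathbf X$ be the solution of $A\mathbf X=\mathbf F$. Let $p\ge 1$ and let $n_1<n_2<\dots<n_p$ be integers with $1<n_1$ and $n_p<n$; set $n_0=1$ and $n_{p+1}=n+1$. Assume that the matrices $B^L_{n_i}$ and $B^R_{n_i}$ (defined below) are nonsingular for $i=1,\dots,p$, and let $\mathbf Z^L_{n_i}$, $\mathbf Z^R_{n_i}$ be the solutions of $B^L_{n_i}\mathbf Z^L_{n_i}=\mathbf e^L$ and $B^R_{n_i}\mathbf Z^R_{n_i}=\mathbf e^R$. Define $$\beta^L_{n_j}=\sum_{l=n_{j-1}}^{n_j-1}(\mathbf F)_l\,(A^{-1})_{n_{j-1},l}\quad (j=2,\dots,p+1),\qquad \beta^R_{n_j}=\sum_{l=n_{j-1}}^{n_j-1}(\mathbf F)_l\,(A^{-1})_{n_j,l}\quad (j=1,\dots,p).$$ Then for every $i=1,\dots,p$, $$(\mathbf X)_{n_i}=\sum_{j=1}^{i}\beta^R_{n_j}\,(\mathbf Z^R_{n_j})_{n_i}+\sum_{j=i+1}^{p+1}\beta^L_{n_j}\,(\mathbf Z^L_{n_{j-1}})_{n_i}.$$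
   Context: For $1\le k\le n$: $B^L_k$ is the $k\times k$ matrix whose rows $1,\dots,k-1$ are rows $1,\dots,k-1$ of $A$ restricted to columns $1,\dots,k$, and whose last row is $(0,\dots,0,1)$; $\mathbf e^L=(0,\dots,0,1)^{\mathrm T}\in\mathbb R^k$, and the components of $\mathbf Z^L_k$ are indexed $1,\dots,k$. $B^R_k$ is the $(n-k+1)\times(n-k+1)$ matrix with rows and columns indexed by $k,\dots,n$, whose row $k$ is $(1,0,\dots,0)$ and whose row $m$ ($m=k+1,\dots,n$) is row $m$ of $A$ restricted to columns $k,\dots,n$; $\mathbf e^R=(1,0,\dots,0)^{\mathrm T}\in\mathbb R^{n-k+1}$, and the components of $\mathbf Z^R_k$ are indexed $k,\dots,n$. $(\mathbf V)_m$ is the $m$-th component of a vector and $(A^{-1})_{r,l}$ the $(r,l)$ entry of $A^{-1}$. *)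

theory Defs
  imports "Jordan_Normal_Form.Matrix"
begin

text \<open>Index convention: Jordan_Normal_Form matrices/vectors are 0-indexed, so the
paper's index m (1-based) corresponds to index m-1 here.\<close>

definition tridiagonal :: "real mat \<Rightarrow> bool" where
  "tridiagonal A \<longleftrightarrow> (\<forall>i<dim_row A. \<forall>j<dim_col A. (j + 1 < i \<or> i + 1 < j) \<longrightarrow> A $$ (i,j) = 0)"

definition BL :: "real mat \<Rightarrow> nat \<Rightarrow> real mat" where
  "BL A k = mat k k (\<lambda>(i,j). if i + 1 < k then A $$ (i,j) else (if j + 1 = k then 1 else 0))"

definition eL :: "nat \<Rightarrow> real vec" where
  "eL k = vec k (\<lambda>i. if i + 1 = k then 1 else 0)"

text \<open>B^R_k (for an n x n matrix A): (n-k+1) x (n-k+1), local index r corresponds to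
paper index k+r; row k is (1,0,...,0); row m>k is row m of A restricted to columns k..n.\<close>
definition BR :: "real mat \<Rightarrow> nat \<Rightarrow> nat \<Rightarrow> real mat" where
  "BR A n k = mat (n - k + 1) (n - k + 1)
     (\<lambda>(r,s). if r = 0 then (if s = 0 then 1 else 0) else A $$ (k - 1 + r, k - 1 + s))"

definition eR :: "nat \<Rightarrow> nat \<Rightarrow> real vec" where
  "eR n k = vec (n - k + 1) (\<lambda>i. if i = 0 then 1 else 0)"

end

theory Submission imports Defs begin

lemma inv_row:
  assumes A: "A \<in> carrier_mat n n" and Ai: "Ainv \<in> carrier_mat n n" and AA: "A * Ainv = 1\<^sub>m n"
    and m: "m < n" and c: "c < n"
  shows "(\<Sum>t\<in>{0..<n}. A $$ (m,t) * Ainv $$ (t,c)) = (if m = c then 1 else 0)"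
proof -
  have "(A * Ainv) $$ (m,c) = 1\<^sub>m n $$ (m,c)" using AA by simp
  thus ?thesis using A Ai m c by (simp add: scalar_prod_def)
qed

lemma inv_cancel:
  assumes B: "invertible_mat (B::real mat)" and Bc: "B \<in> carrier_mat k k"
    and v: "v \<in> carrier_vec k" and w: "w \<in> carrier_vec k" and eq: "B *\<^sub>v v = B *\<^sub>v w"
  shows "v = w"
proof -
  obtain B' where i: "B' * B = 1\<^sub>m (dim_row B')" "B * B' = 1\<^sub>m (dim_row B)"
    using B unfolding invertible_mat_def inverts_mat_def by blast
  have "dim_row B' = k" "dim_col B' = k"
    using i Bc by (metis carrier_matD index_mult_mat(2,3) index_one_mat(2,3))+
  hence B'c: "B' \<in> carrier_mat k k" by auto
  have "v = (B' * B) *\<^sub>v v" using i(1) v B'c by auto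
  also have "\<dots> = B' *\<^sub>v (B *\<^sub>v v)" using B'c Bc v by (simp add: assoc_mult_mat_vec)
  also have "\<dots> = B' *\<^sub>v (B *\<^sub>v w)" using eq by simp
  also have "\<dots> = (B' * B) *\<^sub>v w" using B'c Bc w by (simp add: assoc_mult_mat_vec)
  also have "\<dots> = w" using i(1) w B'c by auto
  finally show ?thesis .
qed

lemma colR:
  assumes A: "A \<in> carrier_mat n n" and tri: "tridiagonal A"
    and Ai: "Ainv \<in> carrier_mat n n" and AA: "A * Ainv = 1\<^sub>m n"
    and Binv: "invertible_mat (BR A n k)"
    and Zc: "Z \<in> carrier_vec (n - k + 1)" and Z: "BR A n k *\<^sub>v Z = eR n k"
    and k: "1 \<le> k" "k \<le> n" and c: "c < k - 1" and r: "r < n - k + 1"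
  shows "Ainv $$ (k - 1 + r, c) = Ainv $$ (k - 1, c) * Z $ r"
proof -
  define K where "K = k - 1"
  define a where "a = Ainv $$ (K, c)"
  define w where "w = vec (n - k + 1) (\<lambda>r. Ainv $$ (K + r, c))"
  have Bc: "BR A n k \<in> carrier_mat (n-k+1) (n-k+1)" unfolding BR_def by simp
  have "BR A n k *\<^sub>v w = BR A n k *\<^sub>v (a \<cdot>\<^sub>v Z)"
  proof -
    have rhs: "BR A n k *\<^sub>v (a \<cdot>\<^sub>v Z) = a \<cdot>\<^sub>v eR n k"
      using mult_mat_vec[OF Bc Zc] Z by simp
    show ?thesis unfolding rhs
    proof (rule eq_vecI)
      show "dim_vec (BR A n k *\<^sub>v w) = dim_vec (a \<cdot>\<^sub>v eR n k)"
        by (simp add: BR_def eR_def)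
      fix q assume "q < dim_vec (a \<cdot>\<^sub>v eR n k)"
      hence q: "q < n - k + 1" by (simp add: eR_def)
      show "(BR A n k *\<^sub>v w) $ q = (a \<cdot>\<^sub>v eR n k) $ q"
      proof (cases "q = 0")
        case True
        then show ?thesis using q
          by (simp add: BR_def eR_def w_def a_def mult_mat_vec_def scalar_prod_def row_def
              K_def sum.atLeast_Suc_lessThan)
      next
        case False
        have lhs: "(BR A n k *\<^sub>v w) $ q = (\<Sum>s\<in>{0..<n-K}. A $$ (K+q, K+s) * Ainv $$ (K+s, c))"
          using q False k by (simp add: BR_def w_def mult_mat_vec_def scalar_prod_def K_def
              Suc_diff_le add.commute)
        have m: "K + q < n" using q k K_def by linarith
        have cn: "c < n" using c k by linarith
        have "(\<Sum>t\<in>{0..<n}. A $$ (K+q,t) * Ainv $$ (t,c)) = 0"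
          using inv_row[OF A Ai AA m cn] c K_def by auto
        moreover have "{0..<n} = {0..<K} \<union> {K..<n}" using k K_def by auto
        moreover have "(\<Sum>t\<in>{0..<K}. A $$ (K+q,t) * Ainv $$ (t,c)) = 0"
        proof (rule sum.neutral, intro ballI)
          fix t assume "t \<in> {0..<K}"
          hence "t + 1 < K + q" "t < n" using False m by auto
          thus "A $$ (K+q,t) * Ainv $$ (t,c) = 0" using tri A m unfolding tridiagonal_def by auto
        qed
        moreover have "(\<Sum>t\<in>{K..<n}. A $$ (K+q,t) * Ainv $$ (t,c))
             = (\<Sum>s\<in>{0..<n-K}. A $$ (K+q, K+s) * Ainv $$ (K+s, c))"
          using sum.shift_bounds_nat_ivl[of "\<lambda>t. A $$ (K+q,t) * Ainv $$ (t,c)" 0 K "n-K"] m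
          by (simp add: add.commute)
        ultimately have "(\<Sum>s\<in>{0..<n-K}. A $$ (K+q, K+s) * Ainv $$ (K+s, c)) = 0"
          by (simp add: sum.union_disjoint ivl_disj_int)
        then show ?thesis using lhs False q by (simp add: eR_def)
      qed
    qed
  qed
  hence "w = a \<cdot>\<^sub>v Z"
    using inv_cancel[OF Binv Bc, of w "a \<cdot>\<^sub>v Z"] Zc by (simp add: w_def)
  hence "w $ r = (a \<cdot>\<^sub>v Z) $ r" by simp
  thus ?thesis using r Zc by (simp add: w_def a_def K_def mult.commute)
qed


lemma colL:
  assumes A: "A \<in> carrier_mat n n" and tri: "tridiagonal A"
    and Ai: "Ainv \<in> carrier_mat n n" and AA: "A * Ainv = 1\<^sub>m n"
    and Binv: "invertible_mat (BL A k)"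
    and Zc: "Z \<in> carrier_vec k" and Z: "BL A k *\<^sub>v Z = eL k"
    and k: "1 \<le> k" "k \<le> n" and c: "k - 1 \<le> c" "c < n" and r: "r < k"
  shows "Ainv $$ (r, c) = Ainv $$ (k - 1, c) * Z $ r"
proof -
  define a where "a = Ainv $$ (k - 1, c)"
  define w where "w = vec k (\<lambda>r. Ainv $$ (r, c))"
  have Bc: "BL A k \<in> carrier_mat k k" unfolding BL_def by simp
  have "BL A k *\<^sub>v w = BL A k *\<^sub>v (a \<cdot>\<^sub>v Z)"
  proof -
    have rhs: "BL A k *\<^sub>v (a \<cdot>\<^sub>v Z) = a \<cdot>\<^sub>v eL k"
      using mult_mat_vec[OF Bc Zc] Z by simp
    show ?thesis unfolding rhs
    proof (rule eq_vecI)
      show "dim_vec (BL A k *\<^sub>v w) = dim_vec (a \<cdot>\<^sub>v eL k)"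
        by (simp add: BL_def eL_def)
      fix q assume "q < dim_vec (a \<cdot>\<^sub>v eL k)"
      hence q: "q < k" by (simp add: eL_def)
      show "(BL A k *\<^sub>v w) $ q = (a \<cdot>\<^sub>v eL k) $ q"
      proof (cases "q + 1 < k")
        case False
        hence qk: "q = k - 1" using q by linarith
        have "(BL A k *\<^sub>v w) $ q = (\<Sum>s\<in>{0..<k}. (if s = k - 1 then Ainv $$ (s, c) else 0))"
          unfolding mult_mat_vec_def scalar_prod_def
          apply (subst index_vec, use q in \<open>simp add: BL_def\<close>)
          apply (rule sum.cong, simp add: w_def)
          using q qk k by (auto simp: BL_def w_def row_def)
        also have "\<dots> = Ainv $$ (k-1, c)" using k by (simp add: sum.delta)
        finally show ?thesis using qk k by (simp add: eL_def a_def)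
      next
        case True
        have lhs: "(BL A k *\<^sub>v w) $ q = (\<Sum>s\<in>{0..<k}. A $$ (q, s) * Ainv $$ (s, c))"
          using q True by (simp add: BL_def w_def mult_mat_vec_def scalar_prod_def)
        have m: "q < n" using q k by linarith
        have "(\<Sum>t\<in>{0..<n}. A $$ (q,t) * Ainv $$ (t,c)) = 0"
          using inv_row[OF A Ai AA m c(2)] c True by auto
        moreover have "{0..<n} = {0..<k} \<union> {k..<n}" using k by auto
        moreover have "(\<Sum>t\<in>{k..<n}. A $$ (q,t) * Ainv $$ (t,c)) = 0"
        proof (rule sum.neutral, intro ballI)
          fix t assume "t \<in> {k..<n}"
          hence "q + 1 < t" "t < n" using True by auto
          thus "A $$ (q,t) * Ainv $$ (t,c) = 0" using tri A m unfolding tridiagonal_def by auto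
        qed
        ultimately have "(\<Sum>s\<in>{0..<k}. A $$ (q, s) * Ainv $$ (s, c)) = 0"
          by (simp add: sum.union_disjoint ivl_disj_int)
        then show ?thesis using lhs True q by (simp add: eL_def)
      qed
    qed
  qed
  hence "w = a \<cdot>\<^sub>v Z"
    using inv_cancel[OF Binv Bc, of w "a \<cdot>\<^sub>v Z"] Zc by (simp add: w_def)
  hence "w $ r = (a \<cdot>\<^sub>v Z) $ r" by simp
  thus ?thesis using r Zc by (simp add: w_def a_def mult.commute)
qed

theorem theorem2:
  fixes A Ainv :: "real mat" and F X :: "real vec" and n p :: nat
    and ns :: "nat \<Rightarrow> nat" and ZL ZR :: "nat \<Rightarrow> real vec"
  assumes A: "A \<in> carrier_mat n n" and tri: "tridiagonal A"
    and Ainv: "Ainv \<in> carrier_mat n n" "A * Ainv = 1\<^sub>m n" "Ainv * A = 1\<^sub>m n"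
    and F: "F \<in> carrier_vec n" and X: "X \<in> carrier_vec n" "A *\<^sub>v X = F"
    and p: "p \<ge> 1"
    and ns0: "ns 0 = 1" and nsp: "ns (Suc p) = n + 1"
    and mono: "\<forall>j\<le>p. ns j < ns (Suc j)"
    and first: "1 < ns 1" and last: "ns p < n"
    and BLinv: "\<forall>i\<in>{1..p}. invertible_mat (BL A (ns i))"
    and BRinv: "\<forall>i\<in>{1..p}. invertible_mat (BR A n (ns i))"
    and ZL: "\<forall>i\<in>{1..p}. ZL (ns i) \<in> carrier_vec (ns i) \<and> BL A (ns i) *\<^sub>v ZL (ns i) = eL (ns i)"
    and ZR: "\<forall>i\<in>{1..p}. ZR (ns i) \<in> carrier_vec (n - ns i + 1) \<and>
                          BR A n (ns i) *\<^sub>v ZR (ns i) = eR n (ns i)"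
  shows "\<forall>i\<in>{1..p}.
     X $ (ns i - 1) =
       (\<Sum>j=1..i. (\<Sum>l=ns (j-1)..<ns j. F $ (l-1) * Ainv $$ (ns j - 1, l - 1))
                    * ZR (ns j) $ (ns i - ns j))
     + (\<Sum>j=i+1..p+1. (\<Sum>l=ns (j-1)..<ns j. F $ (l-1) * Ainv $$ (ns (j-1) - 1, l - 1))
                    * ZL (ns (j-1)) $ (ns i - 1))"
proof
  fix i assume i: "i \<in> {1..p}"
  have smono: "ns a < ns b" if "a < b" "b \<le> Suc p" for a b
    using that
  proof (induction b)
    case 0 then show ?case by simp
  next
    case (Suc b)
    have "ns b < ns (Suc b)" using mono Suc.prems by auto
    then show ?case using Suc by (cases "a = b") auto
  qed
  have nsge: "1 \<le> ns j" if "j \<le> Suc p" for j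
    using smono[of 0 j] ns0 that by (cases j) auto
  have nsle: "ns j \<le> n + 1" if "j \<le> Suc p" for j
    using smono[of j "Suc p"] nsp that by (cases "j = Suc p") auto
  define g where "g = (\<lambda>l. F $ (l-1) * Ainv $$ (ns i - 1, l - 1))"
  have Xeq: "X = Ainv *\<^sub>v F"
  proof -
    have "Ainv *\<^sub>v F = (Ainv * A) *\<^sub>v X" using X A Ainv(1) by (simp add: assoc_mult_mat_vec)
    thus ?thesis using Ainv(3) X by simp
  qed
  have nsi: "ns i - 1 < n" using nsle[of i] i smono[of i "Suc p"] nsp nsge[of i] by auto
  have "X $ (ns i - 1) = (\<Sum>c\<in>{0..<n}. g (c + 1))"
  proof -
    have "X $ (ns i - 1) = (\<Sum>c\<in>{0..<n}. Ainv $$ (ns i - 1, c) * F $ c)"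
      unfolding Xeq using nsi Ainv(1) F by (simp add: mult_mat_vec_def scalar_prod_def)
    also have "\<dots> = (\<Sum>c\<in>{0..<n}. g (c + 1))" unfolding g_def by (simp add: mult.commute)
    finally show ?thesis .
  qed
  also have "\<dots> = (\<Sum>l\<in>{ns 0..<ns (Suc p)}. g l)"
    using sum.shift_bounds_nat_ivl[of g 0 1 n] ns0 nsp by simp
  also have "\<dots> = (\<Sum>j=1..p+1. \<Sum>l=ns (j-1)..<ns j. g l)"
  proof -
    have blocks: "(\<Sum>l\<in>{ns 0..<ns m}. g l) = (\<Sum>j=1..m. \<Sum>l=ns (j-1)..<ns j. g l)"
      if "m \<le> Suc p" for m
      using that
    proof (induction m)
      case 0 then show ?case by simp
    next
      case (Suc m)
      have "ns 0 \<le> ns m" using smono[of 0 m] Suc.prems by (cases m) auto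
      moreover have "ns m \<le> ns (Suc m)" using smono[of m "Suc m"] Suc.prems by auto
      ultimately have "(\<Sum>l\<in>{ns 0..<ns (Suc m)}. g l) = (\<Sum>l\<in>{ns 0..<ns m}. g l) + (\<Sum>l\<in>{ns m..<ns (Suc m)}. g l)"
        by (simp add: sum.atLeastLessThan_concat)
      also have "\<dots> = (\<Sum>j=1..m. \<Sum>l=ns (j-1)..<ns j. g l) + (\<Sum>l\<in>{ns m..<ns (Suc m)}. g l)"
        using Suc by simp
      also have "\<dots> = (\<Sum>j=1..Suc m. \<Sum>l=ns (j-1)..<ns j. g l)"
        by (simp add: sum.cl_ivl_Suc)
      finally show ?case .
    qed
    show ?thesis using blocks[of "Suc p"] by simp
  qed
    also have "\<dots> = (\<Sum>j=1..i. \<Sum>l=ns (j-1)..<ns j. g l) + (\<Sum>j=i+1..p+1. \<Sum>l=ns (j-1)..<ns j. g l)"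
    using sum.ub_add_nat[of 1 i "\<lambda>j. \<Sum>l=ns (j-1)..<ns j. g l" "p+1-i"] i by simp
  also have "(\<Sum>j=1..i. \<Sum>l=ns (j-1)..<ns j. g l) =
       (\<Sum>j=1..i. (\<Sum>l=ns (j-1)..<ns j. F $ (l-1) * Ainv $$ (ns j - 1, l - 1))
                    * ZR (ns j) $ (ns i - ns j))"
  proof (rule sum.cong[OF refl])
    fix j assume j: "j \<in> {1..i}"
    have jp: "j \<in> {1..p}" using j i by auto
    have le: "ns j \<le> ns i" using smono[of j i] j i by (cases "j = i") auto
    show "(\<Sum>l=ns (j-1)..<ns j. g l) = (\<Sum>l=ns (j-1)..<ns j. F $ (l-1) * Ainv $$ (ns j - 1, l - 1))
                    * ZR (ns j) $ (ns i - ns j)"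
      unfolding sum_distrib_right
    proof (rule sum.cong[OF refl])
      fix l assume l: "l \<in> {ns (j-1)..<ns j}"
      have "Ainv $$ (ns j - 1 + (ns i - ns j), l - 1) = Ainv $$ (ns j - 1, l - 1) * ZR (ns j) $ (ns i - ns j)"
      proof (rule colR[OF A tri Ainv(1,2)])
        show "invertible_mat (BR A n (ns j))" using BRinv jp by blast
        show "ZR (ns j) \<in> carrier_vec (n - ns j + 1)" "BR A n (ns j) *\<^sub>v ZR (ns j) = eR n (ns j)"
          using ZR jp by blast+
        have "j \<le> Suc p" "j - 1 \<le> Suc p" using jp by auto
        hence a: "1 \<le> ns j" "1 \<le> ns (j-1)" using nsge by blast+
        thus "1 \<le> ns j" by simp
        show "ns j \<le> n" using le nsi by linarith
        show "l - 1 < ns j - 1" using l a by auto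
        show "ns i - ns j < n - ns j + 1" using le nsi by linarith
      qed
      moreover have "ns j - 1 + (ns i - ns j) = ns i - 1" using le nsge[of j] jp by auto
      ultimately show "g l = F $ (l-1) * Ainv $$ (ns j - 1, l - 1) * ZR (ns j) $ (ns i - ns j)"
        unfolding g_def by simp
    qed
  qed
  also have "(\<Sum>j=i+1..p+1. \<Sum>l=ns (j-1)..<ns j. g l) =
       (\<Sum>j=i+1..p+1. (\<Sum>l=ns (j-1)..<ns j. F $ (l-1) * Ainv $$ (ns (j-1) - 1, l - 1))
                    * ZL (ns (j-1)) $ (ns i - 1))"
  proof (rule sum.cong[OF refl])
    fix j assume j: "j \<in> {i+1..p+1}"
    have jp: "j - 1 \<in> {1..p}" using j i by auto
    have le: "ns i \<le> ns (j-1)"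
    proof (cases "j - 1 = i")
      case False
      hence "i < j - 1" "j - 1 \<le> Suc p" using j by auto
      thus ?thesis using smono[of i "j-1"] by auto
    qed simp
    have lt: "ns (j-1) < n"
    proof (cases "j - 1 = p")
      case False
      hence "j - 1 < p" using j by auto
      thus ?thesis using smono[of "j-1" p] last by auto
    qed (use last in simp)
    show "(\<Sum>l=ns (j-1)..<ns j. g l) = (\<Sum>l=ns (j-1)..<ns j. F $ (l-1) * Ainv $$ (ns (j-1) - 1, l - 1))
                    * ZL (ns (j-1)) $ (ns i - 1)"
      unfolding sum_distrib_right
    proof (rule sum.cong[OF refl])
      fix l assume l: "l \<in> {ns (j-1)..<ns j}"
      have "ns j \<le> n + 1" using nsle[of j] j by auto
      have "Ainv $$ (ns i - 1, l - 1) = Ainv $$ (ns (j-1) - 1, l - 1) * ZL (ns (j-1)) $ (ns i - 1)"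
      proof (rule colL[OF A tri Ainv(1,2)])
        show "invertible_mat (BL A (ns (j-1)))" using BLinv jp by blast
        show "ZL (ns (j-1)) \<in> carrier_vec (ns (j-1))" "BL A (ns (j-1)) *\<^sub>v ZL (ns (j-1)) = eL (ns (j-1))"
          using ZL jp by blast+
        have "i \<le> Suc p" "j - 1 \<le> Suc p" using jp i by auto
        hence a: "1 \<le> ns i" "1 \<le> ns (j-1)" using nsge by blast+
        thus "1 \<le> ns (j-1)" by simp
        show "ns (j-1) \<le> n" using lt by linarith
        show "ns (j-1) - 1 \<le> l - 1" using l by auto
        show "l - 1 < n" using l \<open>ns j \<le> n + 1\<close> a by auto
        show "ns i - 1 < ns (j-1)" using le a by linarith
      qed
      then show "g l = F $ (l-1) * Ainv $$ (ns (j-1) - 1, l - 1) * ZL (ns (j-1)) $ (ns i - 1)"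
        unfolding g_def by simp
    qed
  qed
  finally show "X $ (ns i - 1) =
       (\<Sum>j=1..i. (\<Sum>l=ns (j-1)..<ns j. F $ (l-1) * Ainv $$ (ns j - 1, l - 1))
                    * ZR (ns j) $ (ns i - ns j))
     + (\<Sum>j=i+1..p+1. (\<Sum>l=ns (j-1)..<ns j. F $ (l-1) * Ainv $$ (ns (j-1) - 1, l - 1))
                    * ZL (ns (j-1)) $ (ns i - 1))" .
qed

end
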